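(* Let $f:E\to E'$ be an FD-homomorphism between two Feller-Dynkin processes with state spaces $E$ and $E'$. Let $R$ be the equivalence relation on $E\uplus E'$ given by \[ R=\{(x,y)\in E\times E : f(x)=f(y)\}\cup\{(x,y),(y,x) : x\in E,\ y\in E',\ f(x)=y\}\cup\{(y,y'):y,y'\in E',\ y=y'\}. \] Then $R$ is a bisimulation between the two Feller-Dynkin processes.
   Context: A Feller-Dynkin (FD) process consists of: a locally compact Hausdorff space $E$ with countable base and Borel $\sigma$-algebra; its one-point compactification $E_\partial=E\uplus\{\partial\}$; a strongly continuous semigroup $(\hat P_t)_{t\ge0}$ on $C_0(E)$ with $0\le f\le1\Rightarrow0\le\hat P_tf\le1$, with associated sub-Markov kernels $P_t$ ($\hat P_tf(x)=\int f(y)P_t(x,dy)$); the set $\Omega$ of trajectories (cadlag $\omega:[0,\infty)\to E_\partial$ such that $\omega(t-)=\partial$ or $\omega(t)=\partial$ implies $\omega(u)=\partial$ for all $u\ge t$) with $\mathcal{G}=\sigma(\omega\mapsto\omega(s): s\ge0)$; the probability measures $\mathbb{P}^x$ on $(\Omega,\mathcal{G})$, $x\in E_\partial$, uniquely determined by $\mathbb{P}^x(\omega(0)\in dx_0,\omega(t_1)\in dx_1,\dots,\omega(t_n)\in dx_n)=\delta_x(dx_0)P^{+\partial}_{t_1}(x_0,dx_1)\cdots P^{+\partial}_{t_n-t_{n-1}}(x_{n-1},dx_n)$, where $P^{+\partial}_t(x,\{\partial\})=1-P_t(x,E)$, $P^{+\partial}_t(\partial,\{\partial\})=1$; and a map $obs:E\to2^{AP}$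 ($AP$ finite set of atomic propositions), with $obs(\partial)=\partial$. Given FD processes $(E,\Omega,\mathcal{G},\mathbb{P}^x,obs)$ and $(E',\Omega',\mathcal{G}',\mathbb{P}'^{x},obs')$, an FD-homomorphism is a continuous map $f:E\to E'$ (extended by $f(\partial)=\partial$) such that $obs=obs'\circ f$ and for all $x\in E$ and all $B'\in\mathcal{G}'$, $\mathbb{P}'^{f(x)}(B')=\mathbb{P}^x(\{\omega\in\Omega: f\circ\omega\in B'\})$. Given two FD processes with data indexed by $1,2$ (state spaces $E_1,E_2$, trajectory spaces $\Omega_1,\Omega_2$, $\sigma$-algebras $\mathcal{G}_1,\mathcal{G}_2$, measures $\mathbb{P}^x_1,\mathbb{P}^x_2$, maps $obs_1,obs_2$), a bisimulation between them is an equivalence relation $R$ on $E_1\uplus E_2$ such that whenever $x\,R\,y$ with $x\in E_i$, $y\in E_j$: (i) $obs_i(x)=obs_j(y)$; (ii) for all $B_1\in\mathcal{G}_1$, $B_2\in\mathcal{G}_2$ satisfying "for all $k,l\in\{1,2\}$, all $\omega_k\in B_k$ and all $\omega_l\in\Omega_l$, if $\omega_k(t)\,R\,\omega_l(t)$ for all $t\ge0$ ($\partial$ related to itself) then $\omega_l\in B_l$", we have $\mathbb{P}^x_i(B_i)=\mathbb{P}^y_j(B_j)$. *)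

theory Defs
  imports "HOL-Analysis.Analysis" "HOL-Probability.Probability"
begin

section \<open>One-point compactification E_\<partial> = E + {\<partial>}, with \<partial> represented by None\<close>

definition alexandroff :: "('e::topological_space) option topology" where
  "alexandroff = topology_generated_by
     ({Some ` U | U. open U} \<union> {insert None (Some ` (- K)) | K. compact K})"

definition opt_borel :: "('e::topological_space) option measure" where
  "opt_borel = sigma (topspace alexandroff) {U. openin alexandroff U}"

definition C0 :: "('e::topological_space \<Rightarrow> real) set" where
  "C0 = {g. continuous_on UNIV g \<and>
            (\<forall>e>0. \<exists>K. compact K \<and> (\<forall>x. x \<notin> K \<longrightarrow> \<bar>g x\<bar> < e))}"

definition semigroup_op :: "(real \<Rightarrow> 'e \<Rightarrow> 'e measure) \<Rightarrow> real \<Rightarrow> ('e \<Rightarrow> real) \<Rightarrow> 'e \<Rightarrow> real" where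
  "semigroup_op P t g x = (\<integral>y. g y \<partial>(P t x))"

text \<open>Trajectories are defined on [0,\<infinity>); as functions on the reals we use the convention
  that they are constant (equal to the value at 0) on the negative reals.\<close>
definition trajectories :: "(real \<Rightarrow> ('e::topological_space) option) set" where
  "trajectories = {\<omega>.
     (\<forall>t<0. \<omega> t = \<omega> 0) \<and>
     (\<forall>t\<ge>0. limitin alexandroff \<omega> (\<omega> t) (at t within {t<..})) \<and>
     (\<forall>t>0. \<exists>l. limitin alexandroff \<omega> l (at t within {..<t})) \<and>
     (\<forall>t\<ge>0. (\<omega> t = None \<or> (t > 0 \<and> limitin alexandroff \<omega> None (at t within {..<t})))
              \<longrightarrow> (\<forall>u\<ge>t. \<omega> u = None))}"

definition traj_sigma :: "(real \<Rightarrow> ('e::topological_space) option) measure" where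
  "traj_sigma = sigma trajectories
     {{\<omega> \<in> trajectories. \<omega> s \<in> A} | s A. s \<ge> 0 \<and> A \<in> sets opt_borel}"

definition pplus_int :: "(real \<Rightarrow> 'e \<Rightarrow> 'e measure) \<Rightarrow> real \<Rightarrow> 'e option \<Rightarrow> ('e option \<Rightarrow> ennreal) \<Rightarrow> ennreal" where
  "pplus_int P t z g = (case z of
      None \<Rightarrow> g None
    | Some x \<Rightarrow> (\<integral>\<^sup>+ y. g (Some y) \<partial>(P t x)) + (1 - emeasure (P t x) (space (P t x))) * g None)"

text \<open>Iterated kernel: list of (time increment, set).\<close>
primrec fdd :: "(real \<Rightarrow> 'e \<Rightarrow> 'e measure) \<Rightarrow> 'e option \<Rightarrow> (real \<times> 'e option set) list \<Rightarrow> ennreal" where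
  "fdd P z [] = 1"
| "fdd P z (dA # rest) = pplus_int P (fst dA) z (\<lambda>w. indicator (snd dA) w * fdd P w rest)"

definition FD_process ::
  "(real \<Rightarrow> ('e::{t2_space, second_countable_topology}) \<Rightarrow> 'e measure)
   \<Rightarrow> ('e option \<Rightarrow> (real \<Rightarrow> 'e option) measure) \<Rightarrow> ('e \<Rightarrow> ('ap::finite) set) \<Rightarrow> bool" where
  "FD_process P Pr obs \<longleftrightarrow>
     locally_compact_space (euclidean :: 'e topology) \<and>
     \<comment> \<open>sub-Markov kernels on the Borel sets of E\<close>
     (\<forall>t\<ge>0. \<forall>x. subprob_space (P t x) \<and> sets (P t x) = sets (borel :: 'e measure)) \<and>
     (\<forall>t\<ge>0. \<forall>A \<in> sets (borel :: 'e measure). (\<lambda>x. emeasure (P t x) A) \<in> borel_measurable borel) \<and>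
     \<comment> \<open>the associated operators form a strongly continuous semigroup on C_0(E)\<close>
     (\<forall>t\<ge>0. \<forall>g\<in>C0. semigroup_op P t g \<in> C0) \<and>
     (\<forall>g\<in>C0. semigroup_op P 0 g = g) \<and>
     (\<forall>s\<ge>0. \<forall>t\<ge>0. \<forall>g\<in>C0. semigroup_op P (s + t) g = semigroup_op P s (semigroup_op P t g)) \<and>
     (\<forall>g\<in>C0. \<forall>t\<ge>0. \<forall>e>0. \<exists>d>0. \<forall>s\<ge>0. \<bar>s - t\<bar> < d \<longrightarrow>
         (\<forall>x. \<bar>semigroup_op P s g x - semigroup_op P t g x\<bar> < e)) \<and>
     (\<forall>t\<ge>0. \<forall>g\<in>C0. (\<forall>x. 0 \<le> g x \<and> g x \<le> 1) \<longrightarrow>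
         (\<forall>x. 0 \<le> semigroup_op P t g x \<and> semigroup_op P t g x \<le> 1)) \<and>
     \<comment> \<open>path measures on (\<Omega>, G)\<close>
     (\<forall>z. prob_space (Pr z) \<and> space (Pr z) = trajectories \<and> sets (Pr z) = sets traj_sigma) \<and>
     \<comment> \<open>finite-dimensional distributions, 0 < t_1 < ... < t_n\<close>
     (\<forall>z A0 ts As. sorted_wrt (<) (0 # ts) \<longrightarrow> length As = length ts \<longrightarrow>
         A0 \<in> sets opt_borel \<longrightarrow> set As \<subseteq> sets opt_borel \<longrightarrow>
         emeasure (Pr z) {\<omega> \<in> trajectories. \<omega> 0 \<in> A0 \<and> (\<forall>i<length ts. \<omega> (ts ! i) \<in> As ! i)}
           = indicator A0 z * fdd P z (zip (map2 (-) ts (0 # ts)) As))"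

text \<open>Observations: obs(\<partial>) = \<partial>, i.e. the extension to E_\<partial> is map_option obs.\<close>

definition FD_homomorphism ::
  "(real \<Rightarrow> ('e::{t2_space, second_countable_topology}) \<Rightarrow> 'e measure)
   \<Rightarrow> ('e option \<Rightarrow> (real \<Rightarrow> 'e option) measure) \<Rightarrow> ('e \<Rightarrow> ('ap::finite) set)
   \<Rightarrow> (real \<Rightarrow> ('e'::{t2_space, second_countable_topology}) \<Rightarrow> 'e' measure)
   \<Rightarrow> ('e' option \<Rightarrow> (real \<Rightarrow> 'e' option) measure) \<Rightarrow> ('e' \<Rightarrow> 'ap set)
   \<Rightarrow> ('e \<Rightarrow> 'e') \<Rightarrow> bool" where
  "FD_homomorphism P Pr obs P' Pr' obs' f \<longleftrightarrow>
     FD_process P Pr obs \<and> FD_process P' Pr' obs' \<and>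
     continuous_on UNIV f \<and>
     (\<forall>x. obs x = obs' (f x)) \<and>
     (\<forall>x. \<forall>B' \<in> sets (Pr' (Some (f x))).
        {\<omega> \<in> space (Pr (Some x)). map_option f \<circ> \<omega> \<in> B'} \<in> sets (Pr (Some x)) \<and>
        emeasure (Pr' (Some (f x))) B' = emeasure (Pr (Some x)) {\<omega> \<in> space (Pr (Some x)). map_option f \<circ> \<omega> \<in> B'})"

definition traj_rel :: "('a + 'b) rel \<Rightarrow> (real \<Rightarrow> ('a + 'b) option) \<Rightarrow> (real \<Rightarrow> ('a + 'b) option) \<Rightarrow> bool" where
  "traj_rel R \<omega> \<omega>' \<longleftrightarrow> (\<forall>t\<ge>0. rel_option (\<lambda>u v. (u, v) \<in> R) (\<omega> t) (\<omega>' t))"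

definition R_closed ::
  "('a + 'b) rel \<Rightarrow> (real \<Rightarrow> 'a option) set \<Rightarrow> (real \<Rightarrow> 'b option) set
   \<Rightarrow> (real \<Rightarrow> 'a option) set \<Rightarrow> (real \<Rightarrow> 'b option) set \<Rightarrow> bool" where
  "R_closed R \<Omega>1 \<Omega>2 B1 B2 \<longleftrightarrow>
     (\<forall>\<omega>\<in>B1. (\<forall>\<omega>'\<in>\<Omega>1. traj_rel R (map_option Inl \<circ> \<omega>) (map_option Inl \<circ> \<omega>') \<longrightarrow> \<omega>' \<in> B1) \<and>
              (\<forall>\<omega>'\<in>\<Omega>2. traj_rel R (map_option Inl \<circ> \<omega>) (map_option Inr \<circ> \<omega>') \<longrightarrow> \<omega>' \<in> B2)) \<and>
     (\<forall>\<omega>\<in>B2. (\<forall>\<omega>'\<in>\<Omega>1. traj_rel R (map_option Inr \<circ> \<omega>) (map_option Inl \<circ> \<omega>') \<longrightarrow> \<omega>' \<in> B1) \<and>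
              (\<forall>\<omega>'\<in>\<Omega>2. traj_rel R (map_option Inr \<circ> \<omega>) (map_option Inr \<circ> \<omega>') \<longrightarrow> \<omega>' \<in> B2))"

definition bisimulation ::
  "(real \<Rightarrow> ('a::{t2_space, second_countable_topology}) \<Rightarrow> 'a measure)
   \<Rightarrow> ('a option \<Rightarrow> (real \<Rightarrow> 'a option) measure) \<Rightarrow> ('a \<Rightarrow> ('ap::finite) set)
   \<Rightarrow> (real \<Rightarrow> ('b::{t2_space, second_countable_topology}) \<Rightarrow> 'b measure)
   \<Rightarrow> ('b option \<Rightarrow> (real \<Rightarrow> 'b option) measure) \<Rightarrow> ('b \<Rightarrow> 'ap set)
   \<Rightarrow> ('a + 'b) rel \<Rightarrow> bool" where
  "bisimulation P1 Pr1 obs1 P2 Pr2 obs2 R \<longleftrightarrow>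
     FD_process P1 Pr1 obs1 \<and> FD_process P2 Pr2 obs2 \<and>
     equiv UNIV R \<and>
     (\<forall>(u, v) \<in> R.
        case_sum obs1 obs2 u = case_sum obs1 obs2 v \<and>
        (\<forall>B1 \<in> sets traj_sigma. \<forall>B2 \<in> sets traj_sigma.
           R_closed R trajectories trajectories B1 B2 \<longrightarrow>
           case_sum (\<lambda>x. emeasure (Pr1 (Some x)) B1) (\<lambda>y. emeasure (Pr2 (Some y)) B2) u
           = case_sum (\<lambda>x. emeasure (Pr1 (Some x)) B1) (\<lambda>y. emeasure (Pr2 (Some y)) B2) v))"

definition hom_relation :: "('a \<Rightarrow> 'b) \<Rightarrow> ('a + 'b) rel" where
  "hom_relation f =
     {(Inl x, Inl y) | x y. f x = f y} \<union>
     {(Inl x, Inr y) | x y. f x = y} \<union> {(Inr y, Inl x) | x y. f x = y} \<union>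
     {(Inr y, Inr y') | y y'. y = y'}"

end

theory Submission
  imports Defs
begin

lemma key_meas:
  assumes H: "FD_homomorphism P Pr obs P' Pr' obs' f"
    and B1: "B1 \<in> sets traj_sigma" and B2: "B2 \<in> sets traj_sigma"
    and RC: "R_closed (hom_relation f) trajectories trajectories B1 B2"
  shows "emeasure (Pr (Some x)) B1 = emeasure (Pr' (Some (f x))) B2"
proof -
  define M where "M = Pr (Some x)"
  define M' where "M' = Pr' (Some (f x))"
  have FD: "FD_process P Pr obs" and FD': "FD_process P' Pr' obs'"
    using H unfolding FD_homomorphism_def by auto
  have hom: "\<And>B'. B' \<in> sets M' \<Longrightarrow> {\<omega> \<in> space M. map_option f \<circ> \<omega> \<in> B'} \<in> sets M \<and>
        emeasure M' B' = emeasure M {\<omega> \<in> space M. map_option f \<circ> \<omega> \<in> B'}"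
    using H unfolding FD_homomorphism_def M_def M'_def by blast
  have M: "prob_space M" "space M = trajectories" "sets M = sets traj_sigma"
    using FD unfolding FD_process_def M_def by auto
  have M': "prob_space M'" "space M' = trajectories" "sets M' = sets traj_sigma"
    using FD' unfolding FD_process_def M'_def by auto
  interpret p: prob_space M by fact
  interpret p': prob_space M' by fact
  define S where "S = {\<omega> \<in> space M. map_option f \<circ> \<omega> \<in> trajectories}"
  have "space M' \<in> sets M'" by simp
  from hom[OF this] have S: "S \<in> sets M" "emeasure M S = 1"
    using M'(2) p'.emeasure_space_1 unfolding S_def by auto
  have "p.prob S = 1" using S(2) p.emeasure_eq_measure by simp
  then have "emeasure M (space M - S) = 0" using p.prob_compl[OF S(1)] p.emeasure_eq_measure by simp
  then have null: "space M - S \<in> null_sets M"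
    using S(1) by (auto intro: null_setsI)
  have B1M: "B1 \<in> sets M" using B1 M by simp
  hence B1sub: "B1 \<subseteq> trajectories" using sets.sets_into_space M(2) by blast
  have B2M': "B2 \<in> sets M'" using B2 M' by simp
  hence B2sub: "B2 \<subseteq> trajectories" using sets.sets_into_space M'(2) by blast
  have eq: "B1 - (space M - S) = {\<omega> \<in> space M. map_option f \<circ> \<omega> \<in> B2}"
  proof (rule set_eqI, rule iffI)
    fix \<omega> assume a0: "\<omega> \<in> B1 - (space M - S)"
    then have a: "\<omega> \<in> B1" "\<omega> \<in> S" using B1sub M(2) by auto
    then have tr: "map_option f \<circ> \<omega> \<in> trajectories" unfolding S_def by auto
    have "traj_rel (hom_relation f) (map_option Inl \<circ> \<omega>) (map_option Inr \<circ> (map_option f \<circ> \<omega>))"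
      unfolding traj_rel_def hom_relation_def
      by (intro allI impI, case_tac "\<omega> t") auto
    then have "map_option f \<circ> \<omega> \<in> B2" using RC a(1) tr unfolding R_closed_def by blast
    then show "\<omega> \<in> {\<omega> \<in> space M. map_option f \<circ> \<omega> \<in> B2}" using a S_def by auto
  next
    fix \<omega> assume "\<omega> \<in> {\<omega> \<in> space M. map_option f \<circ> \<omega> \<in> B2}"
    then have a: "\<omega> \<in> space M" "map_option f \<circ> \<omega> \<in> B2" by auto
    have "traj_rel (hom_relation f) (map_option Inr \<circ> (map_option f \<circ> \<omega>)) (map_option Inl \<circ> \<omega>)"
      unfolding traj_rel_def hom_relation_def
      by (intro allI impI, case_tac "\<omega> t") auto
    then have "\<omega> \<in> B1" using RC a M(2) unfolding R_closed_def by blast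
    moreover have "\<omega> \<in> S" using a B2sub unfolding S_def by auto
    ultimately show "\<omega> \<in> B1 - (space M - S)" by auto
  qed
  have "emeasure M B1 = emeasure M (B1 - (space M - S))"
    using emeasure_Diff_null_set[OF null B1M] by simp
  also have "\<dots> = emeasure M' B2" using eq hom[OF B2M'] by simp
  finally show ?thesis unfolding M_def M'_def .
qed

theorem mainTheorem4:
  fixes P :: "real \<Rightarrow> ('e::{t2_space, second_countable_topology}) \<Rightarrow> 'e measure"
    and Pr :: "'e option \<Rightarrow> (real \<Rightarrow> 'e option) measure"
    and obs :: "'e \<Rightarrow> ('ap::finite) set"
    and P' :: "real \<Rightarrow> ('e'::{t2_space, second_countable_topology}) \<Rightarrow> 'e' measure"
    and Pr' :: "'e' option \<Rightarrow> (real \<Rightarrow> 'e' option) measure"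
    and obs' :: "'e' \<Rightarrow> 'ap set"
    and f :: "'e \<Rightarrow> 'e'"
  assumes "FD_homomorphism P Pr obs P' Pr' obs' f"
  shows "bisimulation P Pr obs P' Pr' obs' (hom_relation f)"
proof -
  have FD: "FD_process P Pr obs" "FD_process P' Pr' obs'" and ob: "\<And>x. obs x = obs' (f x)"
    using assms unfolding FD_homomorphism_def by auto
  have eqv: "equiv UNIV (hom_relation f)"
    unfolding equiv_def refl_on_def sym_def trans_def hom_relation_def
    by (auto; metis sum.exhaust)
  show ?thesis
    unfolding bisimulation_def
  proof (intro conjI FD eqv ballI impI, clarify)
    fix u v assume uv: "(u, v) \<in> hom_relation f"
    show "case_sum obs obs' u = case_sum obs obs' v \<and>
       (\<forall>B1\<in>sets traj_sigma. \<forall>B2\<in>sets traj_sigma.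
           R_closed (hom_relation f) trajectories trajectories B1 B2 \<longrightarrow>
           case_sum (\<lambda>x. emeasure (Pr (Some x)) B1) (\<lambda>y. emeasure (Pr' (Some y)) B2) u =
           case_sum (\<lambda>x. emeasure (Pr (Some x)) B1) (\<lambda>y. emeasure (Pr' (Some y)) B2) v)"
      using uv key_meas[OF assms] ob unfolding hom_relation_def
      by (auto; metis)
  qed
qed

end
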